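(* Let $A\in\mathbb{R}^{m\times n}$ with $m\le n$, let $\lambda>0$, and let $D=\begin{bmatrix}A&\sqrt{\lambda}I_m\end{bmatrix}$ have economy SVD $D=U_D\Sigma_D\begin{bmatrix}V_1^T&V_2^T\end{bmatrix}$, where $V_1\in\mathbb{R}^{n\times m}$ consists of the first $n$ rows of the matrix of right singular vectors. Let $X\in\mathbb{R}^{n\times s}$ and suppose that for some $0<\epsilon<1$, $$\|V_1^TXX^TV_1-V_1^TV_1\|_2\le\epsilon .$$ Let $R\in\mathbb{R}^{m\times m}$ be any matrix with $R^TR=(AX)(AX)^T+\lambda I_m$. Then $$\kappa_2(R^{-T}D)\le\sqrt{\frac{1+\epsilon}{1-\epsilon}}.$$
   Context: $\|\cdot\|_2$ is the spectral norm; $\kappa_2(M)$ for the full-row-rank $m\times(n+m)$ matrix $M$ is the ratio of its largest to smallest of its $m$ singular values. $R$ is invertible since $R^TR$ is positive definite. *)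

theory Defs
  imports "HOL-Analysis.Analysis"
begin

definition spec_norm :: "real^'c^'r \<Rightarrow> real" where
  "spec_norm M = onorm (\<lambda>x. M *v x)"

text \<open>The singular values of an r x c matrix M (r rows, full row rank case of interest):
  square roots of the eigenvalues of M M^T (there are r of them, counted with multiplicity).\<close>
definition sing_vals :: "real^'c^'r \<Rightarrow> real set" where
  "sing_vals M = {sqrt \<mu> | \<mu>. \<exists>v. v \<noteq> 0 \<and> (M ** transpose M) *v v = \<mu> *s v}"

definition kappa2 :: "real^'c^'r \<Rightarrow> real" where
  "kappa2 M = Max (sing_vals M) / Min (sing_vals M)"

definition diag_mat :: "real^'m \<Rightarrow> real^'m^'m" where
  "diag_mat d = (\<chi> i j. if i = j then d $ i else 0)"

text \<open>The augmented matrix D = [A, sqrt(lam) I_m].\<close>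
definition aug_mat :: "real^'n^'m \<Rightarrow> real \<Rightarrow> real^('n + 'm)^'m" where
  "aug_mat A lam = (\<chi> i j. case j of Inl k \<Rightarrow> A $ i $ k | Inr k \<Rightarrow> (if k = i then sqrt lam else 0))"

definition top_rows :: "real^'m^('n + 'm) \<Rightarrow> real^'m^'n" where
  "top_rows V = (\<chi> i j. V $ Inl i $ j)"

end

theory Submission imports Defs begin

lemma sym_dot:
  fixes N :: "real^'m^'m"
  assumes "transpose N = N"
  shows "a \<bullet> (N *v b) = (N *v a) \<bullet> b"
proof -
  have "a \<bullet> (N *v b) = (a v* N) \<bullet> b" by (simp add: dot_lmul_matrix)
  also have "a v* N = transpose N *v a" by simp
  finally show ?thesis using assms by simp
qed

lemma sym_eig_exists:
  fixes N :: "real^'m^'m"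
  assumes sym: "transpose N = N"
  shows "\<exists>v \<mu>. v \<noteq> 0 \<and> N *v v = \<mu> *s v"
proof -
  have ne: "sphere (0::real^'m) 1 \<noteq> {}"
    using norm_axis_1[of undefined] by (metis empty_iff mem_sphere_0)
  have cont: "continuous_on (sphere 0 1) (\<lambda>z::real^'m. z \<bullet> (N *v z))"
    by (intro continuous_intros linear_continuous_on bounded_linear.linear
        matrix_vector_mul_bounded_linear) 
  obtain x where x: "x \<in> sphere 0 1" and xmax: "\<And>z. z \<in> sphere 0 1 \<Longrightarrow> z \<bullet> (N *v z) \<le> x \<bullet> (N *v x)"
    using continuous_attains_sup[OF compact_sphere ne cont] by blast
  define l where "l = x \<bullet> (N *v x)"
  define f where "f z = l *s z - N *v z" for z
  have nx: "norm x = 1" using x by simp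
  have psd: "z \<bullet> f z \<ge> 0" for z
  proof (cases "z = 0")
    case True then show ?thesis by (simp add: f_def)
  next
    case False
    define u where "u = (1 / norm z) *\<^sub>R z"
    have u: "u \<in> sphere 0 1" using False by (simp add: u_def)
    have zu: "z = norm z *\<^sub>R u" using False by (simp add: u_def)
    have "u \<bullet> (N *v u) \<le> l" using xmax[OF u] by (simp add: l_def)
    hence "(norm z)^2 * (u \<bullet> (N *v u)) \<le> (norm z)^2 * l" by (simp add: mult_left_mono)
    moreover have "z \<bullet> (N *v z) = (norm z)^2 * (u \<bullet> (N *v u))"
      by (subst (1 2) zu) (simp add: matrix_vector_mult_scaleR power2_eq_square)
    moreover have "z \<bullet> z = (norm z)^2" by (simp add: power2_norm_eq_inner)
    ultimately show ?thesis
      by (simp add: f_def inner_diff_right scalar_mult_eq_scaleR mult.commute)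
  qed
  have fx0: "x \<bullet> f x = 0"
    using nx by (simp add: f_def l_def inner_diff_right scalar_mult_eq_scaleR power2_norm_eq_inner[symmetric])
  have fsym: "a \<bullet> f b = f a \<bullet> b" for a b
    using sym_dot[OF sym, of a b]
    by (simp add: f_def inner_diff_right inner_diff_left scalar_mult_eq_scaleR inner_commute)
  have flin: "f (a - t *\<^sub>R b) = f a - t *\<^sub>R f b" for a b t
    by (simp add: f_def scalar_mult_eq_scaleR matrix_vector_mult_diff_distrib matrix_vector_mult_scaleR algebra_simps)
  define y where "y = f x"
  define a where "a = y \<bullet> y"
  define c where "c = y \<bullet> f y"
  have c0: "c \<ge> 0" using psd by (simp add: c_def)
  have key: "0 \<le> t * (t * c - 2 * a)" for t
  proof -
    have "0 \<le> (x - t *\<^sub>R y) \<bullet> f (x - t *\<^sub>R y)" by (rule psd)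
    also have "\<dots> = x \<bullet> f x - t * (x \<bullet> f y) - t * (y \<bullet> f x) + t*t * (y \<bullet> f y)"
      by (simp add: flin inner_diff_left inner_diff_right algebra_simps)
    also have "x \<bullet> f y = y \<bullet> f x" using fsym[of x y] by (simp add: y_def inner_commute)
    finally show ?thesis using fx0 by (simp add: a_def c_def y_def algebra_simps)
  qed
  have "a = 0"
  proof (rule ccontr)
    assume "a \<noteq> 0"
    hence apos: "a > 0" by (simp add: a_def)
    define t where "t = a / (c + 1)"
    have tpos: "t > 0" using apos c0 by (simp add: t_def)
    have "0 \<le> t * c - 2 * a" using key[of t] tpos by (simp add: zero_le_mult_iff)
    moreover have "t * c \<le> a" using apos c0 by (simp add: t_def field_simps)
    ultimately show False using apos by linarith
  qed
  hence "f x = 0" by (simp add: a_def y_def)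
  hence "N *v x = l *s x" by (simp add: f_def)
  moreover have "x \<noteq> 0" using nx by auto
  ultimately show ?thesis by blast
qed

lemma sym_eig_finite:
  fixes N :: "real^'m^'m"
  assumes sym: "transpose N = N"
  shows "finite {\<mu>. \<exists>v. v \<noteq> 0 \<and> N *v v = \<mu> *s v}" (is "finite ?E")
proof -
  define ev where "ev \<mu> = (SOME v. v \<noteq> 0 \<and> N *v v = \<mu> *s v)" for \<mu>
  have ev: "ev \<mu> \<noteq> 0 \<and> N *v ev \<mu> = \<mu> *s ev \<mu>" if "\<mu> \<in> ?E" for \<mu>
    proof -
    from that obtain v where "v \<noteq> 0 \<and> N *v v = \<mu> *s v" by blast
    thus ?thesis unfolding ev_def by (rule someI)
  qed
  have uniq: "\<mu>1 = \<mu>2" if "v \<noteq> 0" "N *v v = \<mu>1 *s v" "N *v v = \<mu>2 *s v" for v \<mu>1 \<mu>2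
  proof -
    have "\<mu>1 *s v = \<mu>2 *s v" using that(2,3) by metis
    hence "\<mu>1 *\<^sub>R v - \<mu>2 *\<^sub>R v = 0" by (simp add: scalar_mult_eq_scaleR)
    hence "(\<mu>1 - \<mu>2) *\<^sub>R v = 0" by (simp add: scaleR_diff_left)
    thus ?thesis using that(1) by simp
  qed
  have inj: "inj_on ev ?E"
  proof (rule inj_onI)
    fix a b assume a: "a \<in> ?E" and b: "b \<in> ?E" and e: "ev a = ev b"
    have "N *v ev a = b *s ev a" using ev[OF b] e by simp
    thus "a = b" by (rule uniq[OF conjunct1[OF ev[OF a]] conjunct2[OF ev[OF a]]])
  qed
  have orth: "ev a \<bullet> ev b = 0" if a: "a \<in> ?E" and b: "b \<in> ?E" and ne: "a \<noteq> b" for a b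
  proof -
    have e1: "N *v ev b = b *\<^sub>R ev b" using ev[OF b] by (simp add: scalar_mult_eq_scaleR)
    have e2: "N *v ev a = a *\<^sub>R ev a" using ev[OF a] by (simp add: scalar_mult_eq_scaleR)
    have "ev a \<bullet> (N *v ev b) = (N *v ev a) \<bullet> ev b" using sym_dot[OF sym, of "ev a" "ev b"] .
    hence "b * (ev a \<bullet> ev b) = a * (ev a \<bullet> ev b)"
      unfolding e1 e2 inner_scaleR_left inner_scaleR_right .
    thus ?thesis using ne by (metis mult_cancel_right)
  qed
  have "pairwise orthogonal (ev ` ?E)"
    unfolding pairwise_def orthogonal_def
  proof (intro ballI impI)
    fix x y assume "x \<in> ev ` ?E" "y \<in> ev ` ?E" "x \<noteq> y"
    then obtain a b where ab: "a \<in> ?E" "b \<in> ?E" "x = ev a" "y = ev b" by (elim imageE) 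
    have ne: "a \<noteq> b" using \<open>x \<noteq> y\<close> ab(3,4) by metis
    show "x \<bullet> y = 0" unfolding ab(3,4) by (rule orth[OF ab(1,2) ne])
  qed
  moreover have "0 \<notin> ev ` ?E"
  proof
    assume "0 \<in> ev ` ?E"
    then obtain a where a: "a \<in> ?E" and a0: "0 = ev a" by (elim imageE)
    show False using conjunct1[OF ev[OF a]] a0 by simp
  qed
  ultimately have "independent (ev ` ?E)" by (rule pairwise_orthogonal_independent)
  hence "finite (ev ` ?E)" by (rule independent_bound[THEN conjunct1])
  thus ?thesis using inj by (rule finite_imageD)
qed

lemma dot_mat: "(x::real^'r) \<bullet> (M *v y) = (transpose M *v x) \<bullet> (y::real^'c)"
  by (simp add: dot_lmul_matrix)

lemma sum_plus_UNIV:
  "sum f (UNIV :: ('a::finite + 'b::finite) set) = sum (\<lambda>k. f (Inl k)) UNIV + sum (\<lambda>k. f (Inr k)) UNIV"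
proof -
  have "sum f (UNIV :: ('a + 'b) set) = sum f (UNIV <+> UNIV)" by simp
  also have "\<dots> = sum (f \<circ> Inl) UNIV + sum (f \<circ> Inr) UNIV" by (rule sum.Plus) auto
  finally show ?thesis by (simp add: comp_def)
qed

lemma eig_bound:
  fixes A :: "real^'n^'m" and lam :: real and \<epsilon> :: real
    and U :: "real^'m^'m" and \<sigma> :: "real^'m" and V :: "real^'m^('n + 'm)"
    and X :: "real^'s^'n" and R :: "real^'m^'m" and P :: "real^'m^'m"
  assumes lam: "lam > 0"
    and VV: "transpose V ** V = mat 1"
    and Dsvd: "aug_mat A lam = U ** diag_mat \<sigma> ** transpose V"
    and eps: "0 < \<epsilon>" "\<epsilon> < 1"
    and En: "spec_norm (transpose (top_rows V) ** X ** transpose X ** top_rows V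
                    - transpose (top_rows V) ** top_rows V) \<le> \<epsilon>"
    and RR: "transpose R ** R = (A ** X) ** transpose (A ** X) + lam *\<^sub>R mat 1"
    and P1: "transpose R ** P = mat 1" and P2: "P ** transpose R = mat 1"
    and v: "v \<noteq> 0" and eig: "((P ** aug_mat A lam) ** transpose (P ** aug_mat A lam)) *v v = \<mu> *s v"
  shows "1 / (1 + \<epsilon>) \<le> \<mu> \<and> \<mu> \<le> 1 / (1 - \<epsilon>)"
proof -
  define D where "D = aug_mat A lam"
  define V1 where "V1 = top_rows V"
  define K where "K = transpose V1 ** X ** transpose X ** V1"
  define L where "L = transpose V1 ** V1"
  define E where "E = K - L"
  define G where "G = transpose R ** R"
  define Z where "Z = transpose (U ** diag_mat \<sigma>)"
  have DT: "transpose D = V ** Z"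
    unfolding D_def Dsvd Z_def by (simp add: matrix_transpose_mul)
  define w where "w = transpose P *v v"
  have RP: "R ** transpose P = mat 1"
    using arg_cong[OF P2, of transpose] by (simp add: matrix_transpose_mul transpose_mat)
  have Rw: "R *v w = v" unfolding w_def by (simp only: matrix_vector_mul_assoc RP matrix_vector_mul_lid)
  have w0: "w \<noteq> 0" using Rw v by auto
  have "P *v (D *v (transpose D *v w)) = \<mu> *s v"
    using eig unfolding D_def w_def by (simp only: matrix_transpose_mul matrix_vector_mul_assoc matrix_mul_assoc)
  hence Pe: "P *v (D *v (transpose D *v w)) = \<mu> *\<^sub>R v" by (simp only: scalar_mult_eq_scaleR)
  have TRP: "transpose R *v (P *v u) = u" for u
    by (simp only: matrix_vector_mul_assoc P1 matrix_vector_mul_lid)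
  have eq1: "D *v (transpose D *v w) = \<mu> *\<^sub>R (G *v w)"
  proof -
    have "D *v (transpose D *v w) = transpose R *v (P *v (D *v (transpose D *v w)))" by (rule TRP[symmetric])
    also have "\<dots> = transpose R *v (\<mu> *\<^sub>R v)" by (simp only: Pe)
    also have "\<dots> = \<mu> *\<^sub>R (transpose R *v (R *v w))" by (simp only: matrix_vector_mult_scaleR Rw)
    also have "\<dots> = \<mu> *\<^sub>R (G *v w)" by (simp only: G_def matrix_vector_mul_assoc)
    finally show ?thesis .
  qed

  define y where "y = Z *v w"
  have DTw: "transpose D *v w = V *v y" unfolding y_def DT by (simp only: matrix_vector_mul_assoc)
  have a_eq: "(V *v y) \<bullet> (V *v y) = y \<bullet> y"
    using dot_mat[of "V *v y" V y] by (simp only: matrix_vector_mul_assoc VV matrix_vector_mul_lid inner_commute)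
  have lhs: "w \<bullet> (D *v (transpose D *v w)) = y \<bullet> y"
    using dot_mat[of w D "transpose D *v w"] DTw a_eq by simp
  have compL: "(transpose D *v w) $ Inl k = (transpose A *v w) $ k" for k
    unfolding D_def by (simp add: matrix_vector_mult_def transpose_def aug_mat_def)
  have compR: "(transpose D *v w) $ Inr k = sqrt lam * w $ k" for k
    unfolding D_def apply (simp add: matrix_vector_mult_def transpose_def aug_mat_def)
    by (subst sum.cong[OF refl, where h="\<lambda>j. if k = j then sqrt lam * w $ j else 0"]) auto
  have VL: "(V *v y) $ Inl k = (V1 *v y) $ k" for k
    unfolding V1_def by (simp add: matrix_vector_mult_def top_rows_def)
  have ATw: "transpose A *v w = V1 *v y"
    unfolding vec_eq_iff using compL VL DTw by metis
  have Rk: "(V *v y) $ Inr k = sqrt lam * w $ k" for k using compR DTw by metis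
  have sl: "sqrt lam * (sqrt lam * x) = lam * x" for x
    using lam by (simp add: mult.assoc[symmetric])
  have split: "y \<bullet> y = (V1 *v y) \<bullet> (V1 *v y) + lam * (w \<bullet> w)"
  proof -
    have "y \<bullet> y = (V *v y) \<bullet> (V *v y)" using a_eq by simp
    also have "\<dots> = (\<Sum>k\<in>UNIV. (V *v y) $ Inl k * (V *v y) $ Inl k) + (\<Sum>k\<in>UNIV. (V *v y) $ Inr k * (V *v y) $ Inr k)"
      unfolding inner_vec_def by (simp add: sum_plus_UNIV)
    also have "\<dots> = (V1 *v y) \<bullet> (V1 *v y) + lam * (w \<bullet> w)"
      using lam by (simp add: VL Rk inner_vec_def sum_distrib_left algebra_simps sl)
    finally show ?thesis .
  qed
  define Q where "Q = w \<bullet> (G *v w)"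
  have Q1: "Q = (transpose X *v (V1 *v y)) \<bullet> (transpose X *v (V1 *v y)) + lam * (w \<bullet> w)"
  proof -
    have "G *v w = (A ** X) *v (transpose (A ** X) *v w) + lam *\<^sub>R w"
      unfolding G_def RR by (simp only: matrix_vector_mult_add_rdistrib matrix_vector_mul_assoc scaleR_matrix_vector_assoc[symmetric] matrix_vector_mul_lid)
    hence "Q = w \<bullet> ((A ** X) *v (transpose (A ** X) *v w)) + lam * (w \<bullet> w)"
      unfolding Q_def by (simp add: inner_add_right)
    also have "w \<bullet> ((A ** X) *v (transpose (A ** X) *v w)) = (transpose (A ** X) *v w) \<bullet> (transpose (A ** X) *v w)"
      by (rule dot_mat)
    also have "transpose (A ** X) *v w = transpose X *v (V1 *v y)"
      by (simp only: matrix_transpose_mul matrix_vector_mul_assoc[symmetric] ATw)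
    finally show ?thesis .
  qed
  have Ky: "y \<bullet> (K *v y) = (transpose X *v (V1 *v y)) \<bullet> (transpose X *v (V1 *v y))"
  proof -
    have "K *v y = transpose V1 *v (X *v (transpose X *v (V1 *v y)))"
      unfolding K_def by (simp only: matrix_vector_mul_assoc matrix_mul_assoc)
    hence "y \<bullet> (K *v y) = (V1 *v y) \<bullet> (X *v (transpose X *v (V1 *v y)))"
      using dot_mat[of y "transpose V1"] by simp
    also have "\<dots> = (transpose X *v (V1 *v y)) \<bullet> (transpose X *v (V1 *v y))" by (rule dot_mat)
    finally show ?thesis .
  qed
  have Ly: "y \<bullet> (L *v y) = (V1 *v y) \<bullet> (V1 *v y)"
  proof -
    have "L *v y = transpose V1 *v (V1 *v y)"
      unfolding L_def by (simp only: matrix_vector_mul_assoc)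
    thus ?thesis using dot_mat[of y "transpose V1"] by simp
  qed
  have QE: "Q = y \<bullet> y + y \<bullet> (E *v y)"
    unfolding E_def using Q1 Ky Ly split by (simp add: matrix_vector_mult_diff_rdistrib inner_diff_right)
  have Eb: "\<bar>y \<bullet> (E *v y)\<bar> \<le> \<epsilon> * (y \<bullet> y)"
  proof -
    have "\<bar>y \<bullet> (E *v y)\<bar> \<le> norm y * norm (E *v y)" by (rule Cauchy_Schwarz_ineq2)
    also have "norm (E *v y) \<le> onorm ((*v) E) * norm y"
      by (rule onorm[OF matrix_vector_mul_bounded_linear])
    also have "onorm ((*v) E) \<le> \<epsilon>" using En unfolding E_def K_def L_def V1_def spec_norm_def by simp
    finally have "\<bar>y \<bullet> (E *v y)\<bar> \<le> norm y * (\<epsilon> * norm y)"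
      by (simp add: mult_left_mono mult_right_mono)
    thus ?thesis by (simp add: power2_norm_eq_inner[symmetric] power2_eq_square algebra_simps)
  qed
  have Qpos: "Q \<ge> lam * (w \<bullet> w)" using Q1 by simp
  have ww: "w \<bullet> w > 0" using w0 by simp
  have Qp: "Q > 0" using Qpos ww lam by (meson less_le_trans mult_pos_pos)
  have aQ: "y \<bullet> y = \<mu> * Q"
    using lhs eq1 unfolding Q_def by simp
  define a where "a = y \<bullet> y"
  have up: "Q \<le> (1 + \<epsilon>) * a" and lo: "(1 - \<epsilon>) * a \<le> Q"
    using QE Eb unfolding a_def by (auto simp: algebra_simps abs_le_iff)
  have apos: "a > 0" using up Qp eps by (smt (verit) mult_nonneg_nonpos)
  have mu: "\<mu> = a / Q" using aQ Qp unfolding a_def by simp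
  show ?thesis
  proof
    show "1 / (1 + \<epsilon>) \<le> \<mu>" unfolding mu using up Qp eps apos by (simp add: field_simps)
    show "\<mu> \<le> 1 / (1 - \<epsilon>)" unfolding mu using lo Qp eps apos by (simp add: field_simps)
  qed
qed

theorem theorem3p4:
  fixes A :: "real^'n^'m" and lam :: real and \<epsilon> :: real
    and U :: "real^'m^'m" and \<sigma> :: "real^'m" and V :: "real^'m^('n + 'm)"
    and X :: "real^'s^'n" and R :: "real^'m^'m"
  assumes "CARD('m) \<le> CARD('n)"
    and "lam > 0"
    and "transpose U ** U = mat 1"
    and "\<forall>i. \<sigma> $ i \<ge> 0"
    and "transpose V ** V = mat 1"
    and "aug_mat A lam = U ** diag_mat \<sigma> ** transpose V"
    and "0 < \<epsilon>" and "\<epsilon> < 1"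
    and "spec_norm (transpose (top_rows V) ** X ** transpose X ** top_rows V
                    - transpose (top_rows V) ** top_rows V) \<le> \<epsilon>"
    and "transpose R ** R = (A ** X) ** transpose (A ** X) + lam *\<^sub>R mat 1"
  shows "kappa2 (matrix_inv (transpose R) ** aug_mat A lam) \<le> sqrt ((1 + \<epsilon>) / (1 - \<epsilon>))"
proof -
  note lam = assms(2) and eps = assms(7,8) and RR = assms(10)
  have Rinj: "\<forall>x. R *v x = 0 \<longrightarrow> x = 0"
  proof (intro allI impI)
    fix x assume Rx: "R *v x = 0"
    have "x \<bullet> ((transpose R ** R) *v x) = (R *v x) \<bullet> (R *v x)"
      using dot_mat[of x "transpose R" "R *v x"] by (simp only: matrix_vector_mul_assoc transpose_transpose)
    also have "\<dots> = 0" using Rx by simp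
    finally have z: "x \<bullet> ((transpose R ** R) *v x) = 0" .
    have "x \<bullet> ((transpose R ** R) *v x) = (transpose (A ** X) *v x) \<bullet> (transpose (A ** X) *v x) + lam * (x \<bullet> x)"
      unfolding RR
      by (simp only: matrix_vector_mult_add_rdistrib matrix_vector_mul_assoc[of "A ** X" "transpose (A ** X)", symmetric] scaleR_matrix_vector_assoc[symmetric] matrix_vector_mul_lid
          inner_add_right inner_scaleR_right dot_mat[of x "A ** X"] transpose_transpose)
    hence "lam * (x \<bullet> x) \<le> 0" using z
      using inner_ge_zero[of "transpose (A ** X) *v x"] by linarith
    hence "x \<bullet> x \<le> 0" using lam by (simp add: mult_le_0_iff)
    thus "x = 0" using inner_gt_zero_iff[of x] by linarith
  qed
  obtain B where B: "B ** R = mat 1" using Rinj matrix_left_invertible_ker by blast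
  hence B2: "R ** B = mat 1" using matrix_left_right_inverse by blast
  have "transpose R ** transpose B = mat 1 \<and> transpose B ** transpose R = mat 1"
    using arg_cong[OF B, of transpose] arg_cong[OF B2, of transpose]
    by (simp add: matrix_transpose_mul transpose_mat)
  hence "transpose R ** matrix_inv (transpose R) = mat 1 \<and> matrix_inv (transpose R) ** transpose R = mat 1"
    unfolding matrix_inv_def by (rule someI)
  hence P1: "transpose R ** matrix_inv (transpose R) = mat 1" and P2: "matrix_inv (transpose R) ** transpose R = mat 1"
    by auto
  define M where "M = matrix_inv (transpose R) ** aug_mat A lam"
  define N where "N = M ** transpose M"
  define Ev where "Ev = {\<mu>. \<exists>v. v \<noteq> 0 \<and> N *v v = \<mu> *s v}"
  have symN: "transpose N = N" unfolding N_def by (simp add: matrix_transpose_mul)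
  have fin: "finite Ev" unfolding Ev_def by (rule sym_eig_finite[OF symN])
  have nemp: "Ev \<noteq> {}" unfolding Ev_def using sym_eig_exists[OF symN] by blast
  have bnd: "1 / (1 + \<epsilon>) \<le> \<mu> \<and> \<mu> \<le> 1 / (1 - \<epsilon>)" if "\<mu> \<in> Ev" for \<mu>
  proof -
    from that obtain v where "v \<noteq> 0" "N *v v = \<mu> *s v" unfolding Ev_def by blast
    thus ?thesis
      using eig_bound[OF lam assms(5) assms(6) eps assms(9) RR P1 P2] unfolding N_def M_def by blast
  qed
  have SV: "sing_vals M = sqrt ` Ev" unfolding sing_vals_def Ev_def N_def by auto
  define lo where "lo = sqrt (1 / (1 + \<epsilon>))"
  define hi where "hi = sqrt (1 / (1 - \<epsilon>))"
  have lop: "lo > 0" unfolding lo_def using eps by simp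
  have sb: "lo \<le> s \<and> s \<le> hi" if "s \<in> sing_vals M" for s
    using that bnd unfolding SV lo_def hi_def by (auto intro: real_sqrt_le_mono)
  have finS: "finite (sing_vals M)" and neS: "sing_vals M \<noteq> {}" using fin nemp SV by auto
  have mx: "Max (sing_vals M) \<le> hi" using finS neS sb by auto
  have mn: "lo \<le> Min (sing_vals M)" using finS neS sb by auto
  have mxp: "0 \<le> Max (sing_vals M)"
  proof -
    obtain s where s: "s \<in> sing_vals M" using neS by blast
    have "s \<le> Max (sing_vals M)" using finS s by simp
    thus ?thesis using sb[OF s] lop by linarith
  qed
  have "kappa2 M \<le> hi / lo"
    unfolding kappa2_def by (rule frac_le[OF _ mx lop mn]) (use mx mxp in auto)
  also have "hi / lo = sqrt ((1 + \<epsilon>) / (1 - \<epsilon>))"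
    unfolding hi_def lo_def using eps by (simp add: real_sqrt_divide[symmetric] field_simps)
  finally show ?thesis unfolding M_def .
qed

end
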